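(* Let $I$ be a countable set with $|I|\ge2$, let $\mathfrak{M}_i=(S_i,\mathcal{L}_i)$, $i\in I$, be partial linear spaces, $\mathfrak{M}=\bigotimes_{i\in I}\mathfrak{M}_i$ with point set $S=\prod_{i\in I}S_i$, and let $\mathcal{H}_i$ be a hyperplane of $\mathfrak{M}_i$ for each $i\in I$. Then the set $$\mathcal{H}=\bigcup_{i\in I}\{x\in S: x_i\in\mathcal{H}_i\}$$ is a degenerate and non-spiky hyperplane of $\mathfrak{M}$.
   Context: A partial linear space is a pair $(S,\mathcal{L})$ of points and lines such that every line has at least two points, every point lies on a line, two distinct lines share at most one point; points are collinear if on a common line. A subspace is a set such that any line meeting it in at least two points lies in it; a hyperplane is a proper subspace meeting every line; a set $X$ is spiky if every point of $X$ is collinear with some point outside $X$. Segre product: for $a\in S$, $x\in S_i$, $a[i/x]$ is $a$ with $i$-th coordinate replaced by $x$, $a[i/A]=\{a[i/x]:x\in A\}$; lines are $a[i/l]$, $a\in S$, $i\in I$, $l\in\mathcal{L}_i$. For a hyperplane $\mathcal{H}$, $\mathcal{H}^{[a]}_i=\{x\in S_i:a[i/x]\in\mathcal{H}\}$; $\mathcal{H}$ is non-degenerate if all $\mathcal{H}^{[a]}_i$ ($a\in S$, $i\in I$) are hyperplanes of $\mathfrak{M}_i$, and degenerate otherwise. *)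

theory Defs
  imports Main "HOL-Library.FuncSet" "HOL-Library.Countable_Set"
begin

definition partial_linear_space :: "'a set \<Rightarrow> 'a set set \<Rightarrow> bool" where
  "partial_linear_space S L \<longleftrightarrow>
     (\<forall>l\<in>L. l \<subseteq> S \<and> (\<exists>x y. x \<in> l \<and> y \<in> l \<and> x \<noteq> y)) \<and>
     (\<forall>p\<in>S. \<exists>l\<in>L. p \<in> l) \<and>
     (\<forall>l\<in>L. \<forall>m\<in>L. l \<noteq> m \<longrightarrow> (\<forall>x y. x \<in> l \<inter> m \<and> y \<in> l \<inter> m \<longrightarrow> x = y))"

definition collinear_pls :: "'a set set \<Rightarrow> 'a \<Rightarrow> 'a \<Rightarrow> bool" where
  "collinear_pls L x y \<longleftrightarrow> (\<exists>l\<in>L. x \<in> l \<and> y \<in> l)"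

definition subspace_pls :: "'a set \<Rightarrow> 'a set set \<Rightarrow> 'a set \<Rightarrow> bool" where
  "subspace_pls S L X \<longleftrightarrow> X \<subseteq> S \<and>
     (\<forall>l\<in>L. (\<exists>x y. x \<in> l \<inter> X \<and> y \<in> l \<inter> X \<and> x \<noteq> y) \<longrightarrow> l \<subseteq> X)"

definition hyperplane_pls :: "'a set \<Rightarrow> 'a set set \<Rightarrow> 'a set \<Rightarrow> bool" where
  "hyperplane_pls S L X \<longleftrightarrow> subspace_pls S L X \<and> X \<noteq> S \<and> (\<forall>l\<in>L. l \<inter> X \<noteq> {})"

definition spiky :: "'a set \<Rightarrow> 'a set set \<Rightarrow> 'a set \<Rightarrow> bool" where
  "spiky S L X \<longleftrightarrow> (\<forall>x\<in>X. \<exists>y\<in>S - X. collinear_pls L x y)"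

text \<open>Segre product of the spaces (Si i, Li i), i in I. Points are the
  extensional functions in the product; a[i/x] is the update a(i := x).\<close>
definition segre_points :: "'i set \<Rightarrow> ('i \<Rightarrow> 'a set) \<Rightarrow> ('i \<Rightarrow> 'a) set" where
  "segre_points I Si = PiE I Si"

definition subst_set :: "('i \<Rightarrow> 'a) \<Rightarrow> 'i \<Rightarrow> 'a set \<Rightarrow> ('i \<Rightarrow> 'a) set" where
  "subst_set a i A = (\<lambda>x. a(i := x)) ` A"

definition segre_lines :: "'i set \<Rightarrow> ('i \<Rightarrow> 'a set) \<Rightarrow> ('i \<Rightarrow> 'a set set) \<Rightarrow> ('i \<Rightarrow> 'a) set set" where
  "segre_lines I Si Li = {subst_set a i l | a i l. a \<in> segre_points I Si \<and> i \<in> I \<and> l \<in> Li i}"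

definition section_set :: "('i \<Rightarrow> 'a set) \<Rightarrow> ('i \<Rightarrow> 'a) set \<Rightarrow> ('i \<Rightarrow> 'a) \<Rightarrow> 'i \<Rightarrow> 'a set" where
  "section_set Si H a i = {x \<in> Si i. a(i := x) \<in> H}"

definition non_degenerate :: "'i set \<Rightarrow> ('i \<Rightarrow> 'a set) \<Rightarrow> ('i \<Rightarrow> 'a set set) \<Rightarrow> ('i \<Rightarrow> 'a) set \<Rightarrow> bool" where
  "non_degenerate I Si Li H \<longleftrightarrow>
     (\<forall>a\<in>segre_points I Si. \<forall>i\<in>I. hyperplane_pls (Si i) (Li i) (section_set Si H a i))"

definition degenerate :: "'i set \<Rightarrow> ('i \<Rightarrow> 'a set) \<Rightarrow> ('i \<Rightarrow> 'a set set) \<Rightarrow> ('i \<Rightarrow> 'a) set \<Rightarrow> bool" where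
  "degenerate I Si Li H \<longleftrightarrow> \<not> non_degenerate I Si Li H"

end

theory Submission
  imports Defs
begin

theorem proposition3p8:
  fixes I :: "'i set" and Si :: "'i \<Rightarrow> 'a set" and Li :: "'i \<Rightarrow> 'a set set"
    and Hi :: "'i \<Rightarrow> 'a set"
  assumes "countable I"
    and "\<exists>i\<in>I. \<exists>j\<in>I. i \<noteq> j"
    and "\<forall>i\<in>I. partial_linear_space (Si i) (Li i)"
    and "\<forall>i\<in>I. hyperplane_pls (Si i) (Li i) (Hi i)"
  shows "hyperplane_pls (segre_points I Si) (segre_lines I Si Li)
           (\<Union>i\<in>I. {x \<in> segre_points I Si. x i \<in> Hi i})
    \<and> degenerate I Si Li (\<Union>i\<in>I. {x \<in> segre_points I Si. x i \<in> Hi i})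
    \<and> \<not> spiky (segre_points I Si) (segre_lines I Si Li)
           (\<Union>i\<in>I. {x \<in> segre_points I Si. x i \<in> Hi i})"
proof -
  define S where "S = segre_points I Si"
  define H where "H = (\<Union>i\<in>I. {x \<in> S. x i \<in> Hi i})"
  have hsub: "\<And>i. i \<in> I \<Longrightarrow> Hi i \<subseteq> Si i" and hne: "\<And>i. i \<in> I \<Longrightarrow> Hi i \<noteq> Si i"
    and hmeet: "\<And>i l. i \<in> I \<Longrightarrow> l \<in> Li i \<Longrightarrow> l \<inter> Hi i \<noteq> {}"
    and hsubsp: "\<And>i l x y. i \<in> I \<Longrightarrow> l \<in> Li i \<Longrightarrow> x \<in> l \<Longrightarrow> y \<in> l \<Longrightarrow> x \<in> Hi i
        \<Longrightarrow> y \<in> Hi i \<Longrightarrow> x \<noteq> y \<Longrightarrow> l \<subseteq> Hi i"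
    using assms(4) unfolding hyperplane_pls_def subspace_pls_def by blast+
  have lsub: "\<And>i l. i \<in> I \<Longrightarrow> l \<in> Li i \<Longrightarrow> l \<subseteq> Si i"
    and ponl: "\<And>i p. i \<in> I \<Longrightarrow> p \<in> Si i \<Longrightarrow> \<exists>l\<in>Li i. p \<in> l"
    using assms(3) unfolding partial_linear_space_def by blast+
  have "\<forall>i\<in>I. Si i - Hi i \<noteq> {}" using hsub hne by blast
  then obtain b where b: "b \<in> PiE I (\<lambda>i. Si i - Hi i)"
    using PiE_eq_empty_iff[of I "\<lambda>i. Si i - Hi i"] by blast
  have bS: "b \<in> S" using b unfolding S_def segre_points_def by (auto simp: PiE_iff)
  have hnonempty: "\<exists>h. h \<in> Hi i" if iI: "i \<in> I" for i
  proof -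
    have "b i \<in> Si i" using b iI by (auto simp: PiE_iff)
    then obtain l where "l \<in> Li i" using ponl iI by blast
    then show ?thesis using hmeet iI by blast
  qed
  have upd: "a(i := x) \<in> S" if "a \<in> S" "i \<in> I" "x \<in> Si i" for a i x
    using that unfolding S_def segre_points_def by (auto simp: PiE_iff extensional_def)
  have lines: "L \<in> segre_lines I Si Li \<longleftrightarrow> (\<exists>a i l. L = subst_set a i l \<and> a \<in> S \<and> i \<in> I \<and> l \<in> Li i)" for L
    unfolding segre_lines_def S_def by blast
  have subsp: "subspace_pls S (segre_lines I Si Li) H"
    unfolding subspace_pls_def
  proof (intro conjI ballI impI)
    show "H \<subseteq> S" unfolding H_def by blast
    fix L assume L: "L \<in> segre_lines I Si Li"
      and ex: "\<exists>x y. x \<in> L \<inter> H \<and> y \<in> L \<inter> H \<and> x \<noteq> y"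
    from L obtain a i l where Ld: "L = subst_set a i l" "a \<in> S" "i \<in> I" "l \<in> Li i"
      using lines by blast
    from ex obtain p q where pq: "p \<in> L" "p \<in> H" "q \<in> L" "q \<in> H" "p \<noteq> q" by blast
    from pq(1) Ld(1) obtain x where x: "x \<in> l" "p = a(i:=x)" unfolding subst_set_def by blast
    from pq(3) Ld(1) obtain y where y: "y \<in> l" "q = a(i:=y)" unfolding subst_set_def by blast
    have xy: "x \<in> l" "y \<in> l" "a(i:=x) \<in> H" "a(i:=y) \<in> H" "x \<noteq> y"
      using x y pq by auto
    show "L \<subseteq> H"
    proof (cases "\<exists>j\<in>I. j \<noteq> i \<and> a j \<in> Hi j")
      case True
      then obtain j where j: "j \<in> I" "j \<noteq> i" "a j \<in> Hi j" by blast
      show ?thesis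
      proof
        fix p assume "p \<in> L"
        then obtain z where z: "z \<in> l" "p = a(i:=z)" using Ld(1) unfolding subst_set_def by blast
        have "p \<in> S" using z upd[OF Ld(2) Ld(3)] lsub[OF Ld(3,4)] by blast
        moreover have "p j \<in> Hi j" using z j by simp
        ultimately show "p \<in> H" unfolding H_def using j(1) by blast
      qed
    next
      case False
      have inH: "z \<in> Hi i" if zH: "a(i:=z) \<in> H" for z
      proof -
        from zH obtain k where k: "k \<in> I" "(a(i:=z)) k \<in> Hi k" unfolding H_def by blast
        show ?thesis
        proof (cases "k = i")
          case True then show ?thesis using k by simp
        next
          case False2: False
          then have "a k \<in> Hi k" using k by simp
          then show ?thesis using False False2 k(1) by blast
        qed
      qed
      have "x \<in> Hi i" using inH xy(3) by blast
      moreover have "y \<in> Hi i" using inH xy(4) by blast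
      ultimately have "l \<subseteq> Hi i" using hsubsp[OF Ld(3,4) xy(1,2)] xy(5) by blast
      show ?thesis
      proof
        fix p assume "p \<in> L"
        then obtain z where z: "z \<in> l" "p = a(i:=z)" using Ld(1) unfolding subst_set_def by blast
        have "p \<in> S" using z upd[OF Ld(2) Ld(3)] lsub[OF Ld(3,4)] by blast
        moreover have "p i \<in> Hi i" using z \<open>l \<subseteq> Hi i\<close> by auto
        ultimately show "p \<in> H" unfolding H_def using Ld(3) by blast
      qed
    qed
  qed
  have hyp: "hyperplane_pls S (segre_lines I Si Li) H"
    unfolding hyperplane_pls_def
  proof (intro conjI ballI)
    show "subspace_pls S (segre_lines I Si Li) H" by (rule subsp)
    have "b \<notin> H" using b unfolding H_def by (auto simp: PiE_iff)
    then show "H \<noteq> S" using bS by blast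
    fix L assume "L \<in> segre_lines I Si Li"
    then obtain a i l where Ld: "L = subst_set a i l" "a \<in> S" "i \<in> I" "l \<in> Li i"
      using lines by blast
    obtain x where "x \<in> l" "x \<in> Hi i" using hmeet[OF Ld(3,4)] by blast
    then have "a(i:=x) \<in> L \<inter> H" unfolding Ld(1) subst_set_def H_def
      using upd[OF Ld(2) Ld(3)] lsub[OF Ld(3,4)] Ld(3) by force
    then show "L \<inter> H \<noteq> {}" by blast
  qed
  obtain i j where ij: "i \<in> I" "j \<in> I" "i \<noteq> j" using assms(2) by blast
  obtain hi where hi: "hi \<in> Hi i" using hnonempty ij(1) by blast
  obtain hj where hj: "hj \<in> Hi j" using hnonempty ij(2) by blast
  define a where "a = b(j := hj)"
  have aS: "a \<in> S" unfolding a_def using upd[OF bS ij(2)] hj hsub[OF ij(2)] by blast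
  have "section_set Si H a i = Si i"
    unfolding section_set_def H_def a_def using upd[OF aS ij(1)] ij hj unfolding a_def by auto
  then have deg: "degenerate I Si Li H"
    unfolding degenerate_def non_degenerate_def hyperplane_pls_def S_def[symmetric]
    using aS ij(1) by blast
  define c where "c = a(i := hi)"
  have cS: "c \<in> S" unfolding c_def using upd[OF aS ij(1)] hi hsub[OF ij(1)] by blast
  have cH: "c \<in> H" unfolding H_def c_def using cS ij hi unfolding c_def by auto
  have nsp: "\<not> spiky S (segre_lines I Si Li) H"
    unfolding spiky_def
  proof
    assume "\<forall>x\<in>H. \<exists>y\<in>S - H. collinear_pls (segre_lines I Si Li) x y"
    then obtain y where y: "y \<in> S" "y \<notin> H" "collinear_pls (segre_lines I Si Li) c y"
      using cH by blast
    then obtain L where L: "L \<in> segre_lines I Si Li" "c \<in> L" "y \<in> L"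
      unfolding collinear_pls_def by blast
    from L(1) obtain d k l where Ld: "L = subst_set d k l" using lines by blast
    from L(2) Ld obtain u where u: "c = d(k:=u)" unfolding subst_set_def by blast
    from L(3) Ld obtain v where v: "y = d(k:=v)" unfolding subst_set_def by blast
    show False
    proof (cases "k = i")
      case True
      then have "y j = c j" using u v ij(3) by simp
      also have "c j = hj" using ij(3) unfolding c_def a_def by simp
      finally show False using y(1,2) ij(2) hj unfolding H_def by auto
    next
      case False
      then have "y i = c i" using u v by simp
      also have "c i = hi" unfolding c_def by simp
      finally show False using y(1,2) ij(1) hi unfolding H_def by auto
    qed
  qed
  show ?thesis using hyp deg nsp unfolding H_def S_def by blast
qed

end
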